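(* The functor $i:\overline{\mathrm{Pro}}(\mathcal{C})\to \mathrm{Pro}(\mathcal{C})$ is full.
   Context: Let $\mathcal{C}$ be a category. $\mathrm{Pro}(\mathcal{C})$ has objects diagrams $I\to\mathcal{C}$ with $I$ small directed and $\mathrm{Hom}(X,Y)=\lim_s\operatorname{colim}_t\mathrm{Hom}_{\mathcal{C}}(X_t,Y_s)$. $\overline{\mathrm{Pro}}(\mathcal{C})$ has objects $F:A\to\mathcal{C}$ with $A$ a cofinite directed poset of infinite height (poset as category with $u\to v$ iff $u\ge v$), and morphisms $F^A\to G^B$ the connected components $[\alpha,\phi]$ of the poset of pairs $(\alpha,\phi)$, $\alpha:B\to A$ strictly increasing, $\phi:F\circ\alpha\to G$ natural, ordered by $(\alpha',\phi')\ge(\alpha,\phi)$ iff $\alpha'\ge\alpha$ pointwise and $\phi'_b=\phi_b\circ F(\alpha'(b)\to\alpha(b))$. The functor $i$ is the identity on objects and sends $[\alpha,\phi]$ to the pro-morphism represented by the maps $\phi_b:F_{\alpha(b)}\to G_b$, $b\in B$. *)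

theory Defs
  imports Main
begin

record ('o, 'm) cat =
  Obj  :: "'o set"
  Mor  :: "'m set"
  Dom  :: "'m \<Rightarrow> 'o"
  Cod  :: "'m \<Rightarrow> 'o"
  Comp :: "'m \<Rightarrow> 'm \<Rightarrow> 'm"   (* Comp C g f = g \<circ> f *)
  Ide  :: "'o \<Rightarrow> 'm"

definition hom :: "('o, 'm) cat \<Rightarrow> 'o \<Rightarrow> 'o \<Rightarrow> 'm set" where
  "hom C x y = {f \<in> Mor C. Dom C f = x \<and> Cod C f = y}"

definition is_category :: "('o, 'm) cat \<Rightarrow> bool" where
  "is_category C \<longleftrightarrow>
     (\<forall>f\<in>Mor C. Dom C f \<in> Obj C \<and> Cod C f \<in> Obj C) \<and>
     (\<forall>x\<in>Obj C. Ide C x \<in> hom C x x) \<and>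
     (\<forall>f\<in>Mor C. Comp C f (Ide C (Dom C f)) = f \<and> Comp C (Ide C (Cod C f)) f = f) \<and>
     (\<forall>f\<in>Mor C. \<forall>g\<in>Mor C. Cod C f = Dom C g \<longrightarrow> Comp C g f \<in> hom C (Dom C f) (Cod C g)) \<and>
     (\<forall>f\<in>Mor C. \<forall>g\<in>Mor C. \<forall>h\<in>Mor C. Cod C f = Dom C g \<and> Cod C g = Dom C h \<longrightarrow>
         Comp C h (Comp C g f) = Comp C (Comp C h g) f)"

definition is_poset :: "'a set \<Rightarrow> ('a \<Rightarrow> 'a \<Rightarrow> bool) \<Rightarrow> bool" where
  "is_poset A le \<longleftrightarrow>
     (\<forall>u\<in>A. le u u) \<and>
     (\<forall>u\<in>A. \<forall>v\<in>A. le u v \<and> le v u \<longrightarrow> u = v) \<and>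
     (\<forall>u\<in>A. \<forall>v\<in>A. \<forall>w\<in>A. le u v \<and> le v w \<longrightarrow> le u w)"

definition strict :: "('a \<Rightarrow> 'a \<Rightarrow> bool) \<Rightarrow> 'a \<Rightarrow> 'a \<Rightarrow> bool" where
  "strict le u v \<longleftrightarrow> le u v \<and> u \<noteq> v"

definition cofinite_poset :: "'a set \<Rightarrow> ('a \<Rightarrow> 'a \<Rightarrow> bool) \<Rightarrow> bool" where
  "cofinite_poset A le \<longleftrightarrow> (\<forall>v\<in>A. finite {u\<in>A. le u v})"

definition directed_poset :: "'a set \<Rightarrow> ('a \<Rightarrow> 'a \<Rightarrow> bool) \<Rightarrow> bool" where
  "directed_poset A le \<longleftrightarrow> A \<noteq> {} \<and> (\<forall>u\<in>A. \<forall>v\<in>A. \<exists>w\<in>A. le u w \<and> le v w)"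

definition infinite_height :: "'a set \<Rightarrow> ('a \<Rightarrow> 'a \<Rightarrow> bool) \<Rightarrow> bool" where
  "infinite_height A le \<longleftrightarrow>
     (\<forall>n::nat. \<exists>c::nat \<Rightarrow> 'a. (\<forall>i\<le>n. c i \<in> A) \<and> (\<forall>i<n. strict le (c i) (c (Suc i))))"

text \<open>A functor F : A \<rightarrow> C is given by an object map Fo and a morphism map Fm,
  where Fm u v : Fo u \<rightarrow> Fo v is the image of the arrow u \<rightarrow> v (for v \<le> u).\<close>
definition is_diagram ::
  "('o, 'm) cat \<Rightarrow> 'a set \<Rightarrow> ('a \<Rightarrow> 'a \<Rightarrow> bool) \<Rightarrow> ('a \<Rightarrow> 'o) \<Rightarrow> ('a \<Rightarrow> 'a \<Rightarrow> 'm) \<Rightarrow> bool" where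
  "is_diagram C A le Fo Fm \<longleftrightarrow>
     (\<forall>u\<in>A. Fo u \<in> Obj C) \<and>
     (\<forall>u\<in>A. \<forall>v\<in>A. le v u \<longrightarrow> Fm u v \<in> hom C (Fo u) (Fo v)) \<and>
     (\<forall>u\<in>A. Fm u u = Ide C (Fo u)) \<and>
     (\<forall>u\<in>A. \<forall>v\<in>A. \<forall>w\<in>A. le v u \<and> le w v \<longrightarrow> Fm u w = Comp C (Fm v w) (Fm u v))"

definition probar_obj ::
  "('o, 'm) cat \<Rightarrow> 'a set \<Rightarrow> ('a \<Rightarrow> 'a \<Rightarrow> bool) \<Rightarrow> ('a \<Rightarrow> 'o) \<Rightarrow> ('a \<Rightarrow> 'a \<Rightarrow> 'm) \<Rightarrow> bool" where
  "probar_obj C A le Fo Fm \<longleftrightarrow>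
     is_poset A le \<and> cofinite_poset A le \<and> directed_poset A le \<and> infinite_height A le \<and>
     is_diagram C A le Fo Fm"

text \<open>Representatives of colim_t Hom(F_t, y).\<close>
definition colim_set ::
  "('o, 'm) cat \<Rightarrow> 'a set \<Rightarrow> ('a \<Rightarrow> 'o) \<Rightarrow> 'o \<Rightarrow> ('a \<times> 'm) set" where
  "colim_set C A Fo y = {(t, f). t \<in> A \<and> f \<in> hom C (Fo t) y}"

definition colim_rel ::
  "('o, 'm) cat \<Rightarrow> 'a set \<Rightarrow> ('a \<Rightarrow> 'a \<Rightarrow> bool) \<Rightarrow> ('a \<Rightarrow> 'a \<Rightarrow> 'm) \<Rightarrow> ('a \<times> 'm) \<Rightarrow> ('a \<times> 'm) \<Rightarrow> bool" where
  "colim_rel C A le Fm p q \<longleftrightarrow>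
     (\<exists>t''\<in>A. le (fst p) t'' \<and> le (fst q) t'' \<and>
        Comp C (snd p) (Fm t'' (fst p)) = Comp C (snd q) (Fm t'' (fst q)))"

definition colim_class ::
  "('o, 'm) cat \<Rightarrow> 'a set \<Rightarrow> ('a \<Rightarrow> 'a \<Rightarrow> bool) \<Rightarrow> ('a \<Rightarrow> 'o) \<Rightarrow> ('a \<Rightarrow> 'a \<Rightarrow> 'm) \<Rightarrow> 'o
     \<Rightarrow> ('a \<times> 'm) \<Rightarrow> ('a \<times> 'm) set" where
  "colim_class C A le Fo Fm y p = {q \<in> colim_set C A Fo y. colim_rel C A le Fm q p}"

definition colim_hom ::
  "('o, 'm) cat \<Rightarrow> 'a set \<Rightarrow> ('a \<Rightarrow> 'a \<Rightarrow> bool) \<Rightarrow> ('a \<Rightarrow> 'o) \<Rightarrow> ('a \<Rightarrow> 'a \<Rightarrow> 'm) \<Rightarrow> 'o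
     \<Rightarrow> ('a \<times> 'm) set set" where
  "colim_hom C A le Fo Fm y = colim_class C A le Fo Fm y ` colim_set C A Fo y"

definition colim_post ::
  "('o, 'm) cat \<Rightarrow> 'a set \<Rightarrow> ('a \<Rightarrow> 'a \<Rightarrow> bool) \<Rightarrow> ('a \<Rightarrow> 'o) \<Rightarrow> ('a \<Rightarrow> 'a \<Rightarrow> 'm) \<Rightarrow> 'o
     \<Rightarrow> 'm \<Rightarrow> ('a \<times> 'm) set \<Rightarrow> ('a \<times> 'm) set" where
  "colim_post C A le Fo Fm z h X =
     (\<Union>p\<in>X. colim_class C A le Fo Fm z (fst p, Comp C h (snd p)))"

text \<open>Hom_{Pro(C)}(F, G) = lim_s colim_t Hom(F_t, G_s): compatible families of classes
  (extensional: empty outside B).\<close>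
definition pro_hom ::
  "('o, 'm) cat \<Rightarrow> 'a set \<Rightarrow> ('a \<Rightarrow> 'a \<Rightarrow> bool) \<Rightarrow> ('a \<Rightarrow> 'o) \<Rightarrow> ('a \<Rightarrow> 'a \<Rightarrow> 'm)
     \<Rightarrow> 'b set \<Rightarrow> ('b \<Rightarrow> 'b \<Rightarrow> bool) \<Rightarrow> ('b \<Rightarrow> 'o) \<Rightarrow> ('b \<Rightarrow> 'b \<Rightarrow> 'm)
     \<Rightarrow> ('b \<Rightarrow> ('a \<times> 'm) set) set" where
  "pro_hom C A leA Fo Fm B leB Go Gm =
     {x. (\<forall>s\<in>B. x s \<in> colim_hom C A leA Fo Fm (Go s)) \<and> (\<forall>s. s \<notin> B \<longrightarrow> x s = {}) \<and>
         (\<forall>s\<in>B. \<forall>s'\<in>B. leB s' s \<longrightarrow> x s' = colim_post C A leA Fo Fm (Go s') (Gm s s') (x s))}"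

text \<open>Pairs (\<alpha>, \<phi>): \<alpha> : B \<rightarrow> A strictly increasing, \<phi> : F \<circ> \<alpha> \<rightarrow> G natural
  (both extensional, i.e. undefined outside B).\<close>
definition probar_pairs ::
  "('o, 'm) cat \<Rightarrow> 'a set \<Rightarrow> ('a \<Rightarrow> 'a \<Rightarrow> bool) \<Rightarrow> ('a \<Rightarrow> 'o) \<Rightarrow> ('a \<Rightarrow> 'a \<Rightarrow> 'm)
     \<Rightarrow> 'b set \<Rightarrow> ('b \<Rightarrow> 'b \<Rightarrow> bool) \<Rightarrow> ('b \<Rightarrow> 'o) \<Rightarrow> ('b \<Rightarrow> 'b \<Rightarrow> 'm)
     \<Rightarrow> (('b \<Rightarrow> 'a) \<times> ('b \<Rightarrow> 'm)) set" where
  "probar_pairs C A leA Fo Fm B leB Go Gm =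
     {(\<alpha>, \<phi>).
        (\<forall>b\<in>B. \<alpha> b \<in> A) \<and> (\<forall>b. b \<notin> B \<longrightarrow> \<alpha> b = undefined \<and> \<phi> b = undefined) \<and>
        (\<forall>b\<in>B. \<forall>b'\<in>B. strict leB b b' \<longrightarrow> strict leA (\<alpha> b) (\<alpha> b')) \<and>
        (\<forall>b\<in>B. \<phi> b \<in> hom C (Fo (\<alpha> b)) (Go b)) \<and>
        (\<forall>b\<in>B. \<forall>b'\<in>B. leB b' b \<longrightarrow>
            Comp C (Gm b b') (\<phi> b) = Comp C (\<phi> b') (Fm (\<alpha> b) (\<alpha> b')))}"

definition probar_ge ::
  "('o, 'm) cat \<Rightarrow> ('a \<Rightarrow> 'a \<Rightarrow> bool) \<Rightarrow> ('a \<Rightarrow> 'a \<Rightarrow> 'm) \<Rightarrow> 'b set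
     \<Rightarrow> (('b \<Rightarrow> 'a) \<times> ('b \<Rightarrow> 'm)) \<Rightarrow> (('b \<Rightarrow> 'a) \<times> ('b \<Rightarrow> 'm)) \<Rightarrow> bool" where
  "probar_ge C leA Fm B p' p \<longleftrightarrow>
     (\<forall>b\<in>B. leA (fst p b) (fst p' b) \<and>
            snd p' b = Comp C (snd p b) (Fm (fst p' b) (fst p b)))"

definition probar_conn ::
  "('o, 'm) cat \<Rightarrow> 'a set \<Rightarrow> ('a \<Rightarrow> 'a \<Rightarrow> bool) \<Rightarrow> ('a \<Rightarrow> 'o) \<Rightarrow> ('a \<Rightarrow> 'a \<Rightarrow> 'm)
     \<Rightarrow> 'b set \<Rightarrow> ('b \<Rightarrow> 'b \<Rightarrow> bool) \<Rightarrow> ('b \<Rightarrow> 'o) \<Rightarrow> ('b \<Rightarrow> 'b \<Rightarrow> 'm)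
     \<Rightarrow> ((('b \<Rightarrow> 'a) \<times> ('b \<Rightarrow> 'm)) \<times> (('b \<Rightarrow> 'a) \<times> ('b \<Rightarrow> 'm))) set" where
  "probar_conn C A leA Fo Fm B leB Go Gm =
     (let P = probar_pairs C A leA Fo Fm B leB Go Gm;
          R = {(p, q). p \<in> P \<and> q \<in> P \<and> (probar_ge C leA Fm B p q \<or> probar_ge C leA Fm B q p)}
      in R\<^sup>*)"

definition probar_hom ::
  "('o, 'm) cat \<Rightarrow> 'a set \<Rightarrow> ('a \<Rightarrow> 'a \<Rightarrow> bool) \<Rightarrow> ('a \<Rightarrow> 'o) \<Rightarrow> ('a \<Rightarrow> 'a \<Rightarrow> 'm)
     \<Rightarrow> 'b set \<Rightarrow> ('b \<Rightarrow> 'b \<Rightarrow> bool) \<Rightarrow> ('b \<Rightarrow> 'o) \<Rightarrow> ('b \<Rightarrow> 'b \<Rightarrow> 'm)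
     \<Rightarrow> (('b \<Rightarrow> 'a) \<times> ('b \<Rightarrow> 'm)) set set" where
  "probar_hom C A leA Fo Fm B leB Go Gm =
     probar_pairs C A leA Fo Fm B leB Go Gm // probar_conn C A leA Fo Fm B leB Go Gm"

definition i_pair ::
  "('o, 'm) cat \<Rightarrow> 'a set \<Rightarrow> ('a \<Rightarrow> 'a \<Rightarrow> bool) \<Rightarrow> ('a \<Rightarrow> 'o) \<Rightarrow> ('a \<Rightarrow> 'a \<Rightarrow> 'm)
     \<Rightarrow> 'b set \<Rightarrow> ('b \<Rightarrow> 'o) \<Rightarrow> (('b \<Rightarrow> 'a) \<times> ('b \<Rightarrow> 'm)) \<Rightarrow> ('b \<Rightarrow> ('a \<times> 'm) set)" where
  "i_pair C A leA Fo Fm B Go p =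
     (\<lambda>s. if s \<in> B then colim_class C A leA Fo Fm (Go s) (fst p s, snd p s) else {})"

text \<open>i on a component [\<alpha>, \<phi>]: the common value of i_pair on its representatives.\<close>
definition i_hom ::
  "('o, 'm) cat \<Rightarrow> 'a set \<Rightarrow> ('a \<Rightarrow> 'a \<Rightarrow> bool) \<Rightarrow> ('a \<Rightarrow> 'o) \<Rightarrow> ('a \<Rightarrow> 'a \<Rightarrow> 'm)
     \<Rightarrow> 'b set \<Rightarrow> ('b \<Rightarrow> 'o) \<Rightarrow> (('b \<Rightarrow> 'a) \<times> ('b \<Rightarrow> 'm)) set \<Rightarrow> ('b \<Rightarrow> ('a \<times> 'm) set)" where
  "i_hom C A leA Fo Fm B Go c = the_elem (i_pair C A leA Fo Fm B Go ` c)"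

end

theory Submission
  imports Defs
begin

lemma cat_comp: "is_category C \<Longrightarrow> f \<in> hom C a b \<Longrightarrow> g \<in> hom C b c \<Longrightarrow> Comp C g f \<in> hom C a c"
  unfolding is_category_def hom_def by auto

lemma cat_assoc: "is_category C \<Longrightarrow> f \<in> hom C a b \<Longrightarrow> g \<in> hom C b c \<Longrightarrow> h \<in> hom C c d
   \<Longrightarrow> Comp C h (Comp C g f) = Comp C (Comp C h g) f"
  unfolding is_category_def hom_def by auto

lemma cat_idl: "is_category C \<Longrightarrow> f \<in> hom C a b \<Longrightarrow> Comp C (Ide C b) f = f"
  unfolding is_category_def hom_def by auto

lemma cat_idr: "is_category C \<Longrightarrow> f \<in> hom C a b \<Longrightarrow> Comp C f (Ide C a) = f"
  unfolding is_category_def hom_def by auto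

locale fullctx =
  fixes C :: "('o, 'm) cat"
    and A :: "'a set" and leA :: "'a \<Rightarrow> 'a \<Rightarrow> bool" and Fo :: "'a \<Rightarrow> 'o" and Fm :: "'a \<Rightarrow> 'a \<Rightarrow> 'm"
    and B :: "'b set" and leB :: "'b \<Rightarrow> 'b \<Rightarrow> bool" and Go :: "'b \<Rightarrow> 'o" and Gm :: "'b \<Rightarrow> 'b \<Rightarrow> 'm"
    and x :: "'b \<Rightarrow> ('a \<times> 'm) set"
  assumes cat: "is_category C"
    and Fobj: "probar_obj C A leA Fo Fm"
    and Gobj: "probar_obj C B leB Go Gm"
    and xh: "x \<in> pro_hom C A leA Fo Fm B leB Go Gm"
begin

lemma Fpos: "is_poset A leA" and Fcof: "cofinite_poset A leA" and Fdir: "directed_poset A leA"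
  and Fih: "infinite_height A leA" and Fdiag: "is_diagram C A leA Fo Fm"
  using Fobj unfolding probar_obj_def by simp_all
lemma Gpos: "is_poset B leB" and Gcof: "cofinite_poset B leB" and Gdir: "directed_poset B leB"
  and Gih: "infinite_height B leB" and Gdiag: "is_diagram C B leB Go Gm"
  using Gobj unfolding probar_obj_def by simp_all

lemma A_refl: "u \<in> A \<Longrightarrow> leA u u"
  using Fpos unfolding is_poset_def by blast
lemma A_antisym: "u \<in> A \<Longrightarrow> v \<in> A \<Longrightarrow> leA u v \<Longrightarrow> leA v u \<Longrightarrow> u = v"
  using Fpos unfolding is_poset_def by blast
lemma A_trans: "u \<in> A \<Longrightarrow> v \<in> A \<Longrightarrow> w \<in> A \<Longrightarrow> leA u v \<Longrightarrow> leA v w \<Longrightarrow> leA u w"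
  using Fpos unfolding is_poset_def by blast
lemma A_dir: "u \<in> A \<Longrightarrow> v \<in> A \<Longrightarrow> \<exists>w\<in>A. leA u w \<and> leA v w"
  using Fdir unfolding directed_poset_def by blast
lemma A_ne: "A \<noteq> {}"
  using Fdir unfolding directed_poset_def by blast
lemma A_cof: "v \<in> A \<Longrightarrow> finite {u\<in>A. leA u v}"
  using Fcof unfolding cofinite_poset_def by blast
lemma A_ih: "\<exists>c::nat \<Rightarrow> 'a. (\<forall>i\<le>n. c i \<in> A) \<and> (\<forall>i<n. strict leA (c i) (c (Suc i)))"
  using Fih unfolding infinite_height_def by blast

lemma B_refl: "u \<in> B \<Longrightarrow> leB u u"
  using Gpos unfolding is_poset_def by blast
lemma B_antisym: "u \<in> B \<Longrightarrow> v \<in> B \<Longrightarrow> leB u v \<Longrightarrow> leB v u \<Longrightarrow> u = v"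
  using Gpos unfolding is_poset_def by blast
lemma B_trans: "u \<in> B \<Longrightarrow> v \<in> B \<Longrightarrow> w \<in> B \<Longrightarrow> leB u v \<Longrightarrow> leB v w \<Longrightarrow> leB u w"
  using Gpos unfolding is_poset_def by blast
lemma B_cof: "v \<in> B \<Longrightarrow> finite {u\<in>B. leB u v}"
  using Gcof unfolding cofinite_poset_def by blast

lemma Fm_hom: "u \<in> A \<Longrightarrow> v \<in> A \<Longrightarrow> leA v u \<Longrightarrow> Fm u v \<in> hom C (Fo u) (Fo v)"
  using Fdiag unfolding is_diagram_def by blast
lemma Fm_id: "u \<in> A \<Longrightarrow> Fm u u = Ide C (Fo u)"
  using Fdiag unfolding is_diagram_def by blast
lemma Fm_comp: "u \<in> A \<Longrightarrow> v \<in> A \<Longrightarrow> w \<in> A \<Longrightarrow> leA v u \<Longrightarrow> leA w v \<Longrightarrow> Fm u w = Comp C (Fm v w) (Fm u v)"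
  using Fdiag unfolding is_diagram_def by blast
lemma Gm_hom: "u \<in> B \<Longrightarrow> v \<in> B \<Longrightarrow> leB v u \<Longrightarrow> Gm u v \<in> hom C (Go u) (Go v)"
  using Gdiag unfolding is_diagram_def by blast
lemma Gm_id: "u \<in> B \<Longrightarrow> Gm u u = Ide C (Go u)"
  using Gdiag unfolding is_diagram_def by blast

lemma push:
  assumes "f \<in> hom C (Fo t) y" "t \<in> A" "w \<in> A" "w' \<in> A" "leA t w" "leA w w'"
  shows "Comp C f (Fm w' t) = Comp C (Comp C f (Fm w t)) (Fm w' w)"
proof -
  have "Fm w' t = Comp C (Fm w t) (Fm w' w)" using Fm_comp assms by blast
  moreover have "Comp C f (Comp C (Fm w t) (Fm w' w)) = Comp C (Comp C f (Fm w t)) (Fm w' w)"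
    using cat_assoc[OF cat Fm_hom[of w' w] Fm_hom[of w t] assms(1)] assms by auto
  ultimately show ?thesis by simp
qed

abbreviation "cset y \<equiv> colim_set C A Fo y"
abbreviation "crel \<equiv> colim_rel C A leA Fm"
abbreviation "ccls y \<equiv> colim_class C A leA Fo Fm y"

lemma crel_refl: "p \<in> cset y \<Longrightarrow> crel p p"
  unfolding colim_set_def colim_rel_def using A_refl by fastforce

lemma crel_sym: "crel p q \<Longrightarrow> crel q p"
  unfolding colim_rel_def by auto

lemma crel_trans:
  assumes p: "p \<in> cset y" and q: "q \<in> cset y" and r: "r \<in> cset y"
    and pq: "crel p q" and qr: "crel q r"
  shows "crel p r"
proof -
  obtain t1 f1 where P: "p = (t1, f1)" "t1 \<in> A" "f1 \<in> hom C (Fo t1) y" using p unfolding colim_set_def by auto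
  obtain t2 f2 where Q: "q = (t2, f2)" "t2 \<in> A" "f2 \<in> hom C (Fo t2) y" using q unfolding colim_set_def by auto
  obtain t3 f3 where R: "r = (t3, f3)" "t3 \<in> A" "f3 \<in> hom C (Fo t3) y" using r unfolding colim_set_def by auto
  obtain w1 where w1: "w1 \<in> A" "leA t1 w1" "leA t2 w1" "Comp C f1 (Fm w1 t1) = Comp C f2 (Fm w1 t2)"
    using pq P Q unfolding colim_rel_def by auto
  obtain w2 where w2: "w2 \<in> A" "leA t2 w2" "leA t3 w2" "Comp C f2 (Fm w2 t2) = Comp C f3 (Fm w2 t3)"
    using qr Q R unfolding colim_rel_def by auto
  obtain w3 where w3: "w3 \<in> A" "leA w1 w3" "leA w2 w3" using A_dir w1 w2 by blast
  have "Comp C f1 (Fm w3 t1) = Comp C (Comp C f1 (Fm w1 t1)) (Fm w3 w1)"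
    using push[OF P(3) P(2) w1(1) w3(1) w1(2) w3(2)] .
  also have "\<dots> = Comp C (Comp C f2 (Fm w1 t2)) (Fm w3 w1)" using w1 by simp
  also have "\<dots> = Comp C f2 (Fm w3 t2)" using push[OF Q(3) Q(2) w1(1) w3(1) w1(3) w3(2)] by simp
  also have "\<dots> = Comp C (Comp C f2 (Fm w2 t2)) (Fm w3 w2)" using push[OF Q(3) Q(2) w2(1) w3(1) w2(2) w3(3)] .
  also have "\<dots> = Comp C (Comp C f3 (Fm w2 t3)) (Fm w3 w2)" using w2 by simp
  also have "\<dots> = Comp C f3 (Fm w3 t3)" using push[OF R(3) R(2) w2(1) w3(1) w2(3) w3(3)] by simp
  finally have eq: "Comp C f1 (Fm w3 t1) = Comp C f3 (Fm w3 t3)" .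
  have l1: "leA t1 w3" using A_trans[OF P(2) w1(1) w3(1) w1(2) w3(2)] .
  have l3: "leA t3 w3" using A_trans[OF R(2) w2(1) w3(1) w2(3) w3(3)] .
  show ?thesis unfolding colim_rel_def using P R w3(1) eq l1 l3 by auto
qed

lemma same_class:
  assumes "r \<in> cset y" "q1 \<in> ccls y r" "q2 \<in> ccls y r"
  shows "crel q1 q2"
  using assms crel_trans crel_sym unfolding colim_class_def by blast

lemma class_eq:
  assumes "p \<in> cset y" "q \<in> cset y" "crel p q"
  shows "ccls y p = ccls y q"
  using assms crel_trans crel_sym unfolding colim_class_def by blast

lemma in_own_class: "p \<in> cset y \<Longrightarrow> p \<in> ccls y p"
  unfolding colim_class_def using crel_refl by auto

lemma x_rep: "s \<in> B \<Longrightarrow> \<exists>r\<in>cset (Go s). x s = ccls (Go s) r"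
proof -
  assume "s \<in> B"
  then have "x s \<in> colim_hom C A leA Fo Fm (Go s)" using xh unfolding pro_hom_def by blast
  then show ?thesis unfolding colim_hom_def by blast
qed

lemma x_out: "s \<notin> B \<Longrightarrow> x s = {}"
  using xh unfolding pro_hom_def by auto

lemma x_compat: "s \<in> B \<Longrightarrow> s' \<in> B \<Longrightarrow> leB s' s \<Longrightarrow>
   x s' = colim_post C A leA Fo Fm (Go s') (Gm s s') (x s)"
  using xh unfolding pro_hom_def by auto

lemma x_sub: "s \<in> B \<Longrightarrow> x s \<subseteq> cset (Go s)"
  using x_rep unfolding colim_class_def by auto

lemma x_same: "s \<in> B \<Longrightarrow> p \<in> x s \<Longrightarrow> q \<in> x s \<Longrightarrow> crel p q"
  using x_rep same_class by metis

lemma x_eq: "s \<in> B \<Longrightarrow> p \<in> x s \<Longrightarrow> ccls (Go s) p = x s"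
proof -
  assume s: "s \<in> B" and p: "p \<in> x s"
  obtain r where r: "r \<in> cset (Go s)" "x s = ccls (Go s) r" using x_rep s by blast
  have "p \<in> cset (Go s)" "crel p r" using p r unfolding colim_class_def by auto
  then show ?thesis using class_eq r by metis
qed

lemma upper_bound: "finite S \<Longrightarrow> S \<subseteq> A \<Longrightarrow> \<exists>u\<in>A. \<forall>s\<in>S. leA s u"
proof (induction S rule: finite_induct)
  case empty then show ?case using A_ne by auto
next
  case (insert a S)
  then obtain u where u: "u \<in> A" "\<forall>s\<in>S. leA s u" by auto
  obtain w where w: "w \<in> A" "leA a w" "leA u w" using A_dir[of a u] u insert by auto
  show ?case using w u insert A_trans by (intro bexI[of _ w]) blast+
qed

lemma strict_above: assumes "u \<in> A" shows "\<exists>w\<in>A. strict leA u w"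
proof (rule ccontr)
  assume H: "\<not> ?thesis"
  define n where "n = card {v\<in>A. leA v u}"
  obtain c where c: "\<forall>i\<le>n. c i \<in> A" "\<forall>i<n. strict leA (c i) (c (Suc i))" using A_ih by blast
  have le: "leA (c i) (c j)" if "i \<le> j" "j \<le> n" for i j
    using that
  proof (induction j)
    case 0 then show ?case using c A_refl by auto
  next
    case (Suc j)
    show ?case
    proof (cases "i = Suc j")
      case True then show ?thesis using c A_refl Suc by auto
    next
      case False
      then have "leA (c i) (c j)" using Suc by auto
      moreover have "leA (c j) (c (Suc j))" using c Suc unfolding strict_def by auto
      ultimately show ?thesis using A_trans c Suc by (meson Suc_leD le_trans order_refl)
    qed
  qed
  have neq: "c i \<noteq> c j" if "i < j" "j \<le> n" for i j
  proof
    assume e: "c i = c j"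
    have "leA (c (Suc i)) (c j)" using le that by auto
    moreover have "leA (c i) (c (Suc i))" "c i \<noteq> c (Suc i)" using c that unfolding strict_def by auto
    ultimately show False using A_antisym c that e by (metis Suc_leI le_trans)
  qed
  have inj: "inj_on c {0..n}"
  proof (rule inj_onI)
    fix i j assume ij: "i \<in> {0..n}" "j \<in> {0..n}" "c i = c j"
    show "i = j"
    proof (rule ccontr)
      assume "i \<noteq> j"
      then consider "i < j" | "j < i" by linarith
      then show False
      proof cases
        case 1 then show False using neq[of i j] ij by auto
      next
        case 2 then show False using neq[of j i] ij by auto
      qed
    qed
  qed
  obtain w where w: "w \<in> A" "leA u w" "leA (c n) w" using A_dir[of u "c n"] assms c by auto
  have "w = u" using H w unfolding strict_def by auto
  have sub: "c ` {0..n} \<subseteq> {v\<in>A. leA v u}"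
  proof
    fix v assume "v \<in> c ` {0..n}"
    then obtain i where i: "i \<le> n" "v = c i" by auto
    have "leA (c i) (c n)" using le[of i n] i by simp
    then have "leA (c i) u" using A_trans[of "c i" "c n" u] c i w \<open>w = u\<close> assms by simp
    then show "v \<in> {v\<in>A. leA v u}" using c i by simp
  qed
  have "card (c ` {0..n}) \<le> n" using card_mono[OF A_cof[OF assms] sub] unfolding n_def by simp
  moreover have "card (c ` {0..n}) = Suc n" using card_image[OF inj] by simp
  ultimately show False by simp
qed

lemma strict_upper: "finite S \<Longrightarrow> S \<subseteq> A \<Longrightarrow> \<exists>U\<in>A. \<forall>s\<in>S. strict leA s U"
proof -
  assume "finite S" "S \<subseteq> A"
  then obtain u where u: "u \<in> A" "\<forall>s\<in>S. leA s u" using upper_bound by blast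
  obtain U where U: "U \<in> A" "strict leA u U" using strict_above u by blast
  have "strict leA s U" if "s \<in> S" for s
  proof -
    have s: "s \<in> A" using that \<open>S \<subseteq> A\<close> by auto
    have "leA s U" using A_trans s u U that unfolding strict_def by blast
    moreover have "s \<noteq> U" using A_antisym s u U that unfolding strict_def by metis
    ultimately show ?thesis unfolding strict_def by auto
  qed
  then show ?thesis using U by blast
qed

definition good :: "('b \<Rightarrow> 'a \<times> 'm) \<Rightarrow> 'b \<Rightarrow> 'a \<times> 'm \<Rightarrow> bool" where
  "good g b p \<longleftrightarrow> fst p \<in> A \<and> snd p \<in> hom C (Fo (fst p)) (Go b) \<and> p \<in> x b \<and>
     (\<forall>b'\<in>B. strict leB b' b \<longrightarrow> strict leA (fst (g b')) (fst p) \<and>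
        Comp C (Gm b b') (snd p) = Comp C (snd (g b')) (Fm (fst p) (fst (g b'))))"

lemma exists_good:
  assumes b: "b \<in> B"
    and pre: "\<And>b'. b' \<in> B \<Longrightarrow> strict leB b' b \<Longrightarrow>
       fst (g b') \<in> A \<and> snd (g b') \<in> hom C (Fo (fst (g b'))) (Go b') \<and> g b' \<in> x b'"
  shows "\<exists>p. good g b p"
proof -
  obtain r where r: "r \<in> cset (Go b)" "x b = ccls (Go b) r" using x_rep b by blast
  obtain t f where tf: "r = (t, f)" "t \<in> A" "f \<in> hom C (Fo t) (Go b)"
    using r unfolding colim_set_def by auto
  define D where "D = {b'\<in>B. strict leB b' b}"
  have finD: "finite D" unfolding D_def strict_def
    by (rule finite_subset[OF _ B_cof[OF b]]) auto
  have wex: "\<forall>b'\<in>D. \<exists>w\<in>A. leA (fst (g b')) w \<and> leA t w \<and>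
      Comp C (snd (g b')) (Fm w (fst (g b'))) = Comp C (Comp C (Gm b b') f) (Fm w t)"
  proof
    fix b' assume "b' \<in> D"
    then have b': "b' \<in> B" "strict leB b' b" unfolding D_def by auto
    have Gh: "Gm b b' \<in> hom C (Go b) (Go b')" using Gm_hom b b' unfolding strict_def by auto
    have gf: "Comp C (Gm b b') f \<in> hom C (Fo t) (Go b')" using cat_comp[OF cat tf(3) Gh] .
    have "(t, f) \<in> x b" using r tf in_own_class by simp
    moreover have "(t, Comp C (Gm b b') f) \<in> ccls (Go b') (t, Comp C (Gm b b') f)"
      using in_own_class[of "(t, Comp C (Gm b b') f)" "Go b'"] gf tf unfolding colim_set_def by auto
    moreover have "x b' = colim_post C A leA Fo Fm (Go b') (Gm b b') (x b)"
      using x_compat[OF b b'(1)] b' unfolding strict_def by auto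
    ultimately have "(t, Comp C (Gm b b') f) \<in> x b'"
      unfolding colim_post_def by (metis (no_types, lifting) UN_I fst_conv snd_conv)
    moreover have "g b' \<in> x b'" using pre b' by auto
    ultimately have "crel (g b') (t, Comp C (Gm b b') f)" using x_same b' by blast
    then show "\<exists>w\<in>A. leA (fst (g b')) w \<and> leA t w \<and>
      Comp C (snd (g b')) (Fm w (fst (g b'))) = Comp C (Comp C (Gm b b') f) (Fm w t)"
      unfolding colim_rel_def by auto
  qed
  then obtain w where w: "\<And>b'. b' \<in> D \<Longrightarrow> w b' \<in> A \<and> leA (fst (g b')) (w b') \<and> leA t (w b') \<and>
      Comp C (snd (g b')) (Fm (w b') (fst (g b'))) = Comp C (Comp C (Gm b b') f) (Fm (w b') t)"
    by metis
  define S where "S = {t} \<union> w ` D \<union> (\<lambda>b'. fst (g b')) ` D"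
  have "finite S" "S \<subseteq> A" unfolding S_def using finD w tf pre unfolding D_def by auto
  then obtain U where U: "U \<in> A" "\<forall>s\<in>S. strict leA s U" using strict_upper by blast
  have tU: "leA t U" using U unfolding S_def strict_def by auto
  define m where "m = Comp C f (Fm U t)"
  have mh: "m \<in> hom C (Fo U) (Go b)" unfolding m_def using cat_comp[OF cat Fm_hom[OF U(1) tf(2) tU] tf(3)] .
  have "good g b (U, m)"
    unfolding good_def fst_conv snd_conv
  proof (intro conjI ballI impI)
    show "U \<in> A" by fact
    show "m \<in> hom C (Fo U) (Go b)" by fact
    have "crel (U, m) (t, f)" unfolding colim_rel_def using U tU Fm_id[OF U(1)] cat_idr[OF cat mh]
      by (intro bexI[of _ U]) (auto simp: A_refl m_def)
    then show "(U, m) \<in> x b" using r tf mh U unfolding colim_class_def colim_set_def by auto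
  next
    fix b' assume b': "b' \<in> B" "strict leB b' b"
    then have bD: "b' \<in> D" unfolding D_def by auto
    then show "strict leA (fst (g b')) U" using U unfolding S_def by auto
    have wb: "w b' \<in> A" "leA (fst (g b')) (w b')" "leA t (w b')"
      and weq: "Comp C (snd (g b')) (Fm (w b') (fst (g b'))) = Comp C (Comp C (Gm b b') f) (Fm (w b') t)"
      using w[OF bD] by auto
    have wU: "leA (w b') U" using U bD unfolding S_def strict_def by auto
    have a': "fst (g b') \<in> A" "snd (g b') \<in> hom C (Fo (fst (g b'))) (Go b')" using pre b' by auto
    have Gh: "Gm b b' \<in> hom C (Go b) (Go b')" using Gm_hom b b' unfolding strict_def by auto
    have gf: "Comp C (Gm b b') f \<in> hom C (Fo t) (Go b')" using cat_comp[OF cat tf(3) Gh] .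
    have "Comp C (Gm b b') m = Comp C (Comp C (Gm b b') f) (Fm U t)"
      unfolding m_def using cat_assoc[OF cat Fm_hom[OF U(1) tf(2) tU] tf(3) Gh] .
    also have "\<dots> = Comp C (Comp C (Comp C (Gm b b') f) (Fm (w b') t)) (Fm U (w b'))"
      using push[OF gf tf(2) wb(1) U(1) wb(3) wU] .
    also have "\<dots> = Comp C (Comp C (snd (g b')) (Fm (w b') (fst (g b')))) (Fm U (w b'))"
      using weq by simp
    also have "\<dots> = Comp C (snd (g b')) (Fm U (fst (g b')))"
      using push[OF a'(2) a'(1) wb(1) U(1) wb(2) wU] by simp
    finally show "Comp C (Gm b b') m = Comp C (snd (g b')) (Fm U (fst (g b')))" .
  qed
  then show ?thesis by blast
qed

definition R :: "('b \<times> 'b) set" where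
  "R = {(b', b). b \<in> B \<and> b' \<in> B \<and> strict leB b' b}"

lemma wfR: "wf R"
proof (rule wf_subset[OF wf_measure[of "\<lambda>b. card {u\<in>B. leB u b}"]])
  show "R \<subseteq> measure (\<lambda>b. card {u\<in>B. leB u b})"
  proof
    fix p assume "p \<in> R"
    then obtain b' b where p: "p = (b', b)" "b \<in> B" "b' \<in> B" "leB b' b" "b' \<noteq> b"
      unfolding R_def strict_def by auto
    have "{u\<in>B. leB u b'} \<subset> {u\<in>B. leB u b}"
    proof
      show "{u\<in>B. leB u b'} \<subseteq> {u\<in>B. leB u b}" using B_trans p by blast
      have "b \<notin> {u\<in>B. leB u b'}" using B_antisym p by blast
      moreover have "b \<in> {u\<in>B. leB u b}" using B_refl p by auto
      ultimately show "{u\<in>B. leB u b'} \<noteq> {u\<in>B. leB u b}" by blast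
    qed
    then show "p \<in> measure (\<lambda>b. card {u\<in>B. leB u b})"
      using psubset_card_mono[OF B_cof[OF p(2)]] p by auto
  qed
qed

definition step :: "('b \<Rightarrow> 'a \<times> 'm) \<Rightarrow> 'b \<Rightarrow> 'a \<times> 'm" where
  "step g b = (SOME p. good g b p)"

definition ff :: "'b \<Rightarrow> 'a \<times> 'm" where
  "ff = wfrec R step"

lemma good_cut: "b \<in> B \<Longrightarrow> good (cut ff R b) b p = good ff b p"
  unfolding good_def cut_def R_def by auto

lemma ff_good: "b \<in> B \<Longrightarrow> good ff b (ff b)"
proof (induction b rule: wf_induct[OF wfR])
  case (1 b)
  have pre: "fst (cut ff R b b') \<in> A \<and> snd (cut ff R b b') \<in> hom C (Fo (fst (cut ff R b b'))) (Go b')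
       \<and> cut ff R b b' \<in> x b'" if "b' \<in> B" "strict leB b' b" for b'
  proof -
    have "(b', b) \<in> R" using that 1 unfolding R_def by auto
    then show ?thesis using 1 that unfolding good_def cut_def by auto
  qed
  have "ff b = step (cut ff R b) b" using def_wfrec[OF ff_def[THEN eq_reflection] wfR] .
  then have "good (cut ff R b) b (ff b)"
    unfolding step_def using someI_ex[OF exists_good[OF 1(2) pre]] by simp
  then show ?case using good_cut 1 by simp
qed

definition al :: "'b \<Rightarrow> 'a" where "al b = (if b \<in> B then fst (ff b) else undefined)"
definition ph :: "'b \<Rightarrow> 'm" where "ph b = (if b \<in> B then snd (ff b) else undefined)"

abbreviation "P \<equiv> probar_pairs C A leA Fo Fm B leB Go Gm"

lemma pair_in: "(al, ph) \<in> P"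
  unfolding probar_pairs_def
proof (clarify, intro conjI ballI allI impI)
  fix b assume b: "b \<in> B"
  show "al b \<in> A" using ff_good[OF b] b unfolding good_def al_def by auto
  show "ph b \<in> hom C (Fo (al b)) (Go b)" using ff_good[OF b] b unfolding good_def al_def ph_def by auto
next
  fix b assume "b \<notin> B" then show "al b = undefined" "ph b = undefined" unfolding al_def ph_def by auto
next
  fix b b' assume "b \<in> B" "b' \<in> B" "strict leB b b'"
  then show "strict leA (al b) (al b')" using ff_good[of b'] unfolding good_def al_def by auto
next
  fix b b' assume bb: "b \<in> B" "b' \<in> B" "leB b' b"
  show "Comp C (Gm b b') (ph b) = Comp C (ph b') (Fm (al b) (al b'))"
  proof (cases "b' = b")
    case True
    have h: "ph b \<in> hom C (Fo (al b)) (Go b)" "al b \<in> A"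
      using ff_good[OF bb(1)] bb unfolding good_def al_def ph_def by auto
    show ?thesis using True Gm_id[OF bb(1)] Fm_id[OF h(2)] cat_idl[OF cat h(1)] cat_idr[OF cat h(1)] by simp
  next
    case False
    then show ?thesis using ff_good[of b] bb unfolding good_def al_def ph_def strict_def by auto
  qed
qed

lemma ipair_al: "i_pair C A leA Fo Fm B Go (al, ph) = x"
proof
  fix s show "i_pair C A leA Fo Fm B Go (al, ph) s = x s"
  proof (cases "s \<in> B")
    case True
    have "(al s, ph s) \<in> x s" using ff_good[OF True] True unfolding good_def al_def ph_def by auto
    then show ?thesis using x_eq True unfolding i_pair_def by simp
  next
    case False then show ?thesis using x_out unfolding i_pair_def by simp
  qed
qed

lemma ipair_ge:
  assumes "p \<in> P" "q \<in> P" "probar_ge C leA Fm B q p"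
  shows "i_pair C A leA Fo Fm B Go q = i_pair C A leA Fo Fm B Go p"
proof
  fix s show "i_pair C A leA Fo Fm B Go q s = i_pair C A leA Fo Fm B Go p s"
  proof (cases "s \<in> B")
    case True
    have p: "fst p s \<in> A" "snd p s \<in> hom C (Fo (fst p s)) (Go s)"
      using assms True unfolding probar_pairs_def by auto
    have q: "fst q s \<in> A" "snd q s \<in> hom C (Fo (fst q s)) (Go s)"
      using assms True unfolding probar_pairs_def by auto
    have ge: "leA (fst p s) (fst q s)" "snd q s = Comp C (snd p s) (Fm (fst q s) (fst p s))"
      using assms True unfolding probar_ge_def by auto
    have "crel (fst q s, snd q s) (fst p s, snd p s)"
      unfolding colim_rel_def using p q ge A_refl Fm_id[OF q(1)] cat_idr[OF cat q(2)]
      by (intro bexI[of _ "fst q s"]) auto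
    then show ?thesis using class_eq[of "(fst q s, snd q s)" "Go s" "(fst p s, snd p s)"] p q True
      unfolding i_pair_def colim_set_def by auto
  next
    case False then show ?thesis unfolding i_pair_def by simp
  qed
qed

lemma ipair_conn:
  assumes "(p, q) \<in> probar_conn C A leA Fo Fm B leB Go Gm"
  shows "i_pair C A leA Fo Fm B Go q = i_pair C A leA Fo Fm B Go p"
  using assms unfolding probar_conn_def Let_def
proof (induction rule: rtrancl_induct)
  case base then show ?case by simp
next
  case (step y z)
  then have yz: "y \<in> P" "z \<in> P" "probar_ge C leA Fm B y z \<or> probar_ge C leA Fm B z y" by auto
  have "i_pair C A leA Fo Fm B Go z = i_pair C A leA Fo Fm B Go y"
    using yz(3)
  proof
    assume "probar_ge C leA Fm B y z" then show ?thesis using ipair_ge[OF yz(2) yz(1)] by simp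
  next
    assume "probar_ge C leA Fm B z y" then show ?thesis using ipair_ge[OF yz(1) yz(2)] by simp
  qed
  then show ?case using step.IH by simp
qed

theorem main: "\<exists>c \<in> probar_hom C A leA Fo Fm B leB Go Gm. i_hom C A leA Fo Fm B Go c = x"
proof
  let ?c = "probar_conn C A leA Fo Fm B leB Go Gm `` {(al, ph)}"
  show "?c \<in> probar_hom C A leA Fo Fm B leB Go Gm"
    unfolding probar_hom_def using pair_in by (auto simp: quotient_def)
  have "i_pair C A leA Fo Fm B Go ` ?c = {x}"
  proof -
    have "((al, ph), (al, ph)) \<in> probar_conn C A leA Fo Fm B leB Go Gm"
      unfolding probar_conn_def Let_def by simp
    moreover have "i_pair C A leA Fo Fm B Go q = x" if "q \<in> ?c" for q
      using ipair_conn[of "(al, ph)" q] ipair_al that by simp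
    ultimately show ?thesis
    proof (intro equalityI subsetI)
      fix y assume "y \<in> i_pair C A leA Fo Fm B Go ` ?c"
      then obtain q where "q \<in> ?c" "y = i_pair C A leA Fo Fm B Go q" by blast
      then show "y \<in> {x}" using ipair_conn[of "(al, ph)" q] ipair_al by simp
    next
      fix y assume "y \<in> {x}"
      moreover have "(al, ph) \<in> ?c" using \<open>((al, ph), (al, ph)) \<in> _\<close> by simp
      ultimately show "y \<in> i_pair C A leA Fo Fm B Go ` ?c" using ipair_al by (metis imageI singletonD)
    qed
  qed
  then show "i_hom C A leA Fo Fm B Go ?c = x" unfolding i_hom_def by simp
qed

end

theorem proposition3p4:
  fixes C :: "('o, 'm) cat"
    and A :: "'a set" and leA :: "'a \<Rightarrow> 'a \<Rightarrow> bool" and Fo :: "'a \<Rightarrow> 'o" and Fm :: "'a \<Rightarrow> 'a \<Rightarrow> 'm"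
    and B :: "'b set" and leB :: "'b \<Rightarrow> 'b \<Rightarrow> bool" and Go :: "'b \<Rightarrow> 'o" and Gm :: "'b \<Rightarrow> 'b \<Rightarrow> 'm"
  assumes "is_category C"
    and "probar_obj C A leA Fo Fm"
    and "probar_obj C B leB Go Gm"
    and "x \<in> pro_hom C A leA Fo Fm B leB Go Gm"
  shows "\<exists>c \<in> probar_hom C A leA Fo Fm B leB Go Gm. i_hom C A leA Fo Fm B Go c = x"
proof -
  interpret fullctx C A leA Fo Fm B leB Go Gm x using assms by unfold_locales
  show ?thesis by (rule main)
qed

end
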